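(* Let $M$ be a $\mathrm{GF}(q)$-representable matroid, let $S$ and $T$ be disjoint subsets of $E(M)$ with $\kappa_M(S,T)=k$, and let $(A,B)$ be a partition of $E(M)$ with $S\subseteq A$, $T\subseteq B$ and $\lambda_M(A)=k$. Let $(C,D)$ be a partition of $E(M)-(S\cup T)$ such that $\lambda_{M/C\setminus D}(S)=k$. Then $(M^+_{(A,B)}/C\setminus D)|X=M^+_{(A,B)}|X$.
   Context: For a matroid $M$ with ground set $E$, $\lambda_M(X):=r_M(X)+r_M(E-X)-r(M)$, and for disjoint $S,T\subseteq E$, $\kappa_M(S,T):=\min\{\lambda_M(X):S\subseteq X\subseteq E-T\}$. Fix a representation of $M$ by an $r\times E$ matrix $D$ over $\mathrm{GF}(q)$, and for $Y\subseteq E$ let $\langle Y\rangle$ be the span of the columns of $D$ indexed by $Y$. If $\lambda_M(A)=k$ for a partition $(A,B)$ of $E$, then $\langle A\rangle\cap\langle B\rangle$ is a $k$-dimensional subspace of $\mathrm{GF}(q)^r$. The matroid $M^+_{(A,B)}$ is obtained from $M$ by adding a new set $X$ of $(q^k-1)/(q-1)$ elements, represented by vectors forming a copy of the projective geometry $\mathrm{PG}(k-1,q)$ inside $\langle A\rangle\cap\langle B\rangle$ (one vector from each 1-dimensional subspace of $\langle A\rangle\cap\langle B\rangle$); i.e. it is the matroid of the matrix $D$ extended by these columns. $|X$ denotes restriction to $X$. *)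

theory Defs
  imports "HOL-Analysis.Analysis"
begin

text \<open>A GF(q)-represented matroid: ground set E, column vectors given by
  Dm :: 'e => 'a^'r with 'a a finite field. Matroids are handled through their
  rank functions.\<close>

definition rk :: "('e \<Rightarrow> 'a::field ^ 'r) \<Rightarrow> 'e set \<Rightarrow> nat" where
  "rk Dm Y = vec.dim (Dm ` Y)"

definition conn :: "('e set \<Rightarrow> nat) \<Rightarrow> 'e set \<Rightarrow> 'e set \<Rightarrow> nat" where
  "conn r E Y = r Y + r (E - Y) - r E"

definition kappa :: "('e set \<Rightarrow> nat) \<Rightarrow> 'e set \<Rightarrow> 'e set \<Rightarrow> 'e set \<Rightarrow> nat" where
  "kappa r E S T = Min {conn r E Y | Y. S \<subseteq> Y \<and> Y \<subseteq> E - T}"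

text \<open>Rank function of the contraction by C (deletion only shrinks the ground set).\<close>
definition contr_rk :: "('e set \<Rightarrow> nat) \<Rightarrow> 'e set \<Rightarrow> 'e set \<Rightarrow> nat" where
  "contr_rk r C Y = r (Y \<union> C) - r C"

text \<open>The 1-dimensional subspaces of span(A) \<inter> span(B): index set of the new elements X.\<close>
definition pts :: "('e \<Rightarrow> 'a::field ^ 'r) \<Rightarrow> 'e set \<Rightarrow> 'e set \<Rightarrow> ('a ^ 'r) set set" where
  "pts Dm A B = {L. vec.subspace L \<and> vec.dim L = 1 \<and>
                   L \<subseteq> vec.span (Dm ` A) \<inter> vec.span (Dm ` B)}"

text \<open>Representation of M^+_(A,B): old elements Inl e, new elements Inr L, where
  L ranges over pts, represented by a nonzero vector of L.\<close>
definition ext_rep :: "('e \<Rightarrow> 'a::field ^ 'r) \<Rightarrow> ('e + ('a ^ 'r) set) \<Rightarrow> 'a ^ 'r" where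
  "ext_rep Dm x = (case x of Inl e \<Rightarrow> Dm e | Inr L \<Rightarrow> (SOME v. v \<in> L \<and> v \<noteq> 0))"

definition new_elems :: "('e \<Rightarrow> 'a::field ^ 'r) \<Rightarrow> 'e set \<Rightarrow> 'e set \<Rightarrow> ('e + ('a ^ 'r) set) set" where
  "new_elems Dm A B = Inr ` pts Dm A B"

end

theory Submission
  imports Defs
begin

lemma dim_un:
  fixes U V :: "('a::field ^ 'n) set"
  shows "vec.dim (U \<union> V) + vec.dim (vec.span U \<inter> vec.span V) = vec.dim U + vec.dim V"
proof -
  have "vec.dim {x + y |x y. x \<in> vec.span U \<and> y \<in> vec.span V} + vec.dim (vec.span U \<inter> vec.span V)
        = vec.dim (vec.span U) + vec.dim (vec.span V)"
    by (rule vec.dim_sums_Int[OF vec.subspace_span vec.subspace_span])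
  then show ?thesis by (simp add: vec.span_Un[symmetric])
qed

lemma rk_un:
  "rk Dm (X \<union> Y) + vec.dim (vec.span (Dm ` X) \<inter> vec.span (Dm ` Y)) = rk Dm X + rk Dm Y"
  unfolding rk_def image_Un by (rule dim_un)

lemma rk_mono: "X \<subseteq> Y \<Longrightarrow> rk Dm X \<le> rk Dm Y"
  unfolding rk_def by (intro vec.dim_subset image_mono)

theorem lemma4p1:
  fixes Dm :: "'e \<Rightarrow> 'a::{field,finite} ^ 'r"
    and E S T A B C D :: "'e set" and k :: nat
  assumes "finite E"
    and "S \<subseteq> E" "T \<subseteq> E" "S \<inter> T = {}"
    and "kappa (rk Dm) E S T = k"
    and "A \<union> B = E" "A \<inter> B = {}" "S \<subseteq> A" "T \<subseteq> B"
    and "conn (rk Dm) E A = k"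
    and "C \<union> D = E - (S \<union> T)" "C \<inter> D = {}"
    and "conn (contr_rk (rk Dm) C) (E - C - D) S = k"
  shows "\<forall>Y \<subseteq> new_elems Dm A B.
           contr_rk (rk (ext_rep Dm)) (Inl ` C) Y = rk (ext_rep Dm) Y"
proof -
  define sp where "sp X = vec.span (Dm ` X)" for X
  define CA where "CA = C \<inter> A"
  define CB where "CB = C \<inter> B"
  have BE: "E - A = B" using assms by blast
  have AB: "E = A \<union> B" using assms by blast
  have c1: "rk Dm A + rk Dm B - rk Dm E = k" using assms(10) unfolding conn_def BE .
  have h1: "rk Dm A + rk Dm B = rk Dm E + k"
    using c1 rk_un[of Dm A B] unfolding AB[symmetric] by linarith
  have e1: "E - C - D - S = T" "E - C - D = S \<union> T" using assms by blast+
  have m1: "rk Dm C \<le> rk Dm (S \<union> C)" "rk Dm C \<le> rk Dm (T \<union> C)" "rk Dm C \<le> rk Dm (S \<union> T \<union> C)"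
    by (auto intro: rk_mono)
  have u1: "rk Dm ((S \<union> C) \<union> (T \<union> C)) + vec.dim (sp (S \<union> C) \<inter> sp (T \<union> C))
      = rk Dm (S \<union> C) + rk Dm (T \<union> C)" unfolding sp_def by (rule rk_un)
  have "(S \<union> C) \<union> (T \<union> C) = S \<union> T \<union> C" by blast
  moreover have c2: "(rk Dm (S \<union> C) - rk Dm C) + (rk Dm (T \<union> C) - rk Dm C) - (rk Dm (S \<union> T \<union> C) - rk Dm C) = k"
    using assms(13) unfolding conn_def contr_rk_def e1(1) unfolding e1(2) by (simp add: Un_assoc)
  ultimately have h2: "vec.dim (sp (S \<union> C) \<inter> sp (T \<union> C)) = rk Dm C + k"
  proof -
    have "rk Dm (S \<union> T \<union> C) + vec.dim (sp (S \<union> C) \<inter> sp (T \<union> C)) = rk Dm (S \<union> C) + rk Dm (T \<union> C)"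
      using u1 \<open>(S \<union> C) \<union> (T \<union> C) = S \<union> T \<union> C\<close> by simp
    moreover have "vec.span (Dm ` C) \<subseteq> sp (S \<union> C) \<inter> sp (T \<union> C)"
      unfolding sp_def by (intro Int_greatest vec.span_mono image_mono) auto
    then have "rk Dm C \<le> vec.dim (sp (S \<union> C) \<inter> sp (T \<union> C))"
      unfolding rk_def by (metis vec.dim_span vec.dim_subset)
    ultimately show ?thesis using c2 m1 by linarith
  qed
  have CAB: "C = CA \<union> CB" unfolding CA_def CB_def using assms by blast
  have "sp (S \<union> C) \<inter> sp (T \<union> C) \<subseteq> sp (A \<union> CB) \<inter> sp (B \<union> CA)"
    unfolding sp_def CAB using assms CA_def CB_def
    by (intro Int_mono vec.span_mono image_mono) auto
  then have "rk Dm C + k \<le> vec.dim (sp (A \<union> CB) \<inter> sp (B \<union> CA))"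
    using h2 vec.dim_subset by metis
  moreover have "rk Dm ((A \<union> CB) \<union> (B \<union> CA)) + vec.dim (sp (A \<union> CB) \<inter> sp (B \<union> CA))
      = rk Dm (A \<union> CB) + rk Dm (B \<union> CA)" unfolding sp_def by (rule rk_un)
  moreover have "(A \<union> CB) \<union> (B \<union> CA) = E" using assms CA_def CB_def by blast
  moreover have "rk Dm (A \<union> CB) + vec.dim (sp A \<inter> sp CB) = rk Dm A + rk Dm CB"
    unfolding sp_def by (rule rk_un)
  moreover have "rk Dm (B \<union> CA) + vec.dim (sp B \<inter> sp CA) = rk Dm B + rk Dm CA"
    unfolding sp_def by (rule rk_un)
  moreover have "rk Dm (CA \<union> CB) + vec.dim (sp CA \<inter> sp CB) = rk Dm CA + rk Dm CB"
    unfolding sp_def by (rule rk_un)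
  ultimately have ineq: "vec.dim (sp A \<inter> sp CB) + vec.dim (sp B \<inter> sp CA) \<le> vec.dim (sp CA \<inter> sp CB)"
  proof -
    assume a1: "rk Dm C + k \<le> vec.dim (sp (A \<union> CB) \<inter> sp (B \<union> CA))"
      and a2: "rk Dm ((A \<union> CB) \<union> (B \<union> CA)) + vec.dim (sp (A \<union> CB) \<inter> sp (B \<union> CA))
      = rk Dm (A \<union> CB) + rk Dm (B \<union> CA)"
      and a3: "(A \<union> CB) \<union> (B \<union> CA) = E"
      and a4: "rk Dm (A \<union> CB) + vec.dim (sp A \<inter> sp CB) = rk Dm A + rk Dm CB"
      and a5: "rk Dm (B \<union> CA) + vec.dim (sp B \<inter> sp CA) = rk Dm B + rk Dm CA"
      and a6: "rk Dm (CA \<union> CB) + vec.dim (sp CA \<inter> sp CB) = rk Dm CA + rk Dm CB"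
    from a2 a3 have b2: "rk Dm E + vec.dim (sp (A \<union> CB) \<inter> sp (B \<union> CA))
      = rk Dm (A \<union> CB) + rk Dm (B \<union> CA)" by simp
    from a6 CAB have b6: "rk Dm C + vec.dim (sp CA \<inter> sp CB) = rk Dm CA + rk Dm CB" by simp
    show ?thesis using a1 b2 a4 a5 b6 h1 by linarith
  qed
  have "sp CA \<subseteq> sp A" "sp CB \<subseteq> sp B" unfolding sp_def CA_def CB_def
    by (intro vec.span_mono image_mono; blast)+
  then have s1: "vec.dim (sp CA \<inter> sp CB) \<le> vec.dim (sp A \<inter> sp CB)"
     and s2: "vec.dim (sp CA \<inter> sp CB) \<le> vec.dim (sp B \<inter> sp CA)"
    by (auto intro!: vec.dim_subset)
  have z1: "sp A \<inter> sp CB \<subseteq> {0}" and z2: "sp B \<inter> sp CA \<subseteq> {0}"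
  proof -
    have "vec.dim (sp A \<inter> sp CB) = 0" "vec.dim (sp B \<inter> sp CA) = 0" using ineq s1 s2 by linarith+
    then show "sp A \<inter> sp CB \<subseteq> {0}" "sp B \<inter> sp CA \<subseteq> {0}" by simp_all
  qed
  have W0: "sp A \<inter> sp B \<inter> sp C \<subseteq> {0}"
  proof
    fix w assume w: "w \<in> sp A \<inter> sp B \<inter> sp C"
    then have "w \<in> vec.span (Dm ` CA \<union> Dm ` CB)" unfolding sp_def CAB image_Un by auto
    then obtain a b where ab: "w = a + b" "a \<in> sp CA" "b \<in> sp CB"
      unfolding vec.span_Un sp_def by blast
    have "a \<in> sp A" using \<open>sp CA \<subseteq> sp A\<close> ab by blast
    then have "b \<in> sp A" using w ab unfolding sp_def
      by (metis IntD1 add_diff_cancel_left' vec.span_diff)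
    then have "b = 0" using z1 ab by blast
    then have "a \<in> sp B" using w ab by simp
    then have "a = 0" using z2 ab by blast
    then show "w \<in> {0}" using ab \<open>b = 0\<close> by simp
  qed
  show ?thesis
  proof (intro allI impI)
    fix Y assume Y: "Y \<subseteq> new_elems Dm A B"
    have VW: "ext_rep Dm ` Y \<subseteq> sp A \<inter> sp B"
    proof
      fix v assume "v \<in> ext_rep Dm ` Y"
      then obtain L where L: "L \<in> pts Dm A B" "v = ext_rep Dm (Inr L)"
        using Y unfolding new_elems_def by blast
      have "vec.dim L = 1" using L(1) unfolding pts_def by blast
      then have "\<not> L \<subseteq> {0}" by (metis vec.dim_eq_0 one_neq_zero)
      then have ex: "\<exists>v. v \<in> L \<and> v \<noteq> 0" by blast
      have "v \<in> L" using someI_ex[OF ex] L(2) unfolding ext_rep_def by simp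
      then show "v \<in> sp A \<inter> sp B" using L(1) unfolding pts_def sp_def by blast
    qed
    have "vec.span (ext_rep Dm ` Y) \<subseteq> sp A \<inter> sp B"
      using VW unfolding sp_def
      by (intro vec.span_minimal) (auto intro: vec.subspace_inter vec.subspace_span)
    then have "vec.span (ext_rep Dm ` Y) \<inter> sp C \<subseteq> {0}" using W0 by blast
    then have d0: "vec.dim (vec.span (ext_rep Dm ` Y) \<inter> vec.span (ext_rep Dm ` Inl ` C)) = 0"
      unfolding sp_def by (simp add: image_image ext_rep_def)
    show "contr_rk (rk (ext_rep Dm)) (Inl ` C) Y = rk (ext_rep Dm) Y"
      using rk_un[of "ext_rep Dm" Y "Inl ` C"] d0 unfolding contr_rk_def by simp
  qed
qed

end
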